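(* Let $q$ be a prime power, $r\geq1$, $\delta\geq2$ integers and $R=r+\delta-1$. Let $a_1,\dots,a_\ell\in\mathbb{F}_q^*$ and $h=\prod_{i=1}^{\ell}(T^R-a_i)$. Let $P\in\mathbb{F}_q[T]$ be monic irreducible of degree $m$ with $P\equiv1\pmod h$, let $\alpha\in\mathbb{F}_{q^m}$ be a root of $P$, and let $\bar\phi:\mathbb{F}_q[T]\to\mathbb{F}_{q^m}\{\tau\}$ be the Drinfeld module with $\bar\phi_T=\alpha+\tau$ (the reduction modulo $P$ of the Carlitz module $\phi_T=T+\tau$). Then for every $i\in\{1,\ldots,\ell\}$, $\dim_{\mathbb{F}_q}\bar\phi[T^R-a_i]=R$.
   Context: For a field $K\supseteq\mathbb{F}_q$, $K\{\tau\}$ is the twisted polynomial ring with $(a\tau^i)(b\tau^j)=ab^{q^i}\tau^{i+j}$, and a Drinfeld module $\bar\phi$ is an $\mathbb{F}_q$-algebra homomorphism $\mathbb{F}_q[T]\to K\{\tau\}$ determined by $\bar\phi_T$. For $a\in\mathbb{F}_q[T]$, $\bar\phi_a(x)$ is the $q$-linearized polynomial obtained from $\bar\phi_a$ by replacing $\tau^i$ with $x^{q^i}$, and $\bar\phi[a]=\{\beta\in\overline{\mathbb{F}}_{q}:\bar\phi_a(\beta)=0\}$ is the set of $a$-torsion points, an $\mathbb{F}_q$-vector space. *)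

theory Defs
  imports "HOL-Computational_Algebra.Polynomial" "HOL-Algebra.Algebraic_Closure_Type" "HOL-Library.Cardinality"
begin

text \<open>Elements of the twisted polynomial ring K{tau} are represented by their
  coefficient sequences, i.e. as polynomials f with coeff f i the coefficient of tau^i.\<close>

definition tw_mult :: "nat \<Rightarrow> 'a::comm_ring_1 poly \<Rightarrow> 'a poly \<Rightarrow> 'a poly" where
  "tw_mult q f g =
     (\<Sum>i\<le>degree f. \<Sum>j\<le>degree g. monom (coeff f i * coeff g j ^ (q ^ i)) (i + j))"

definition tw_pow :: "nat \<Rightarrow> 'a::comm_ring_1 poly \<Rightarrow> nat \<Rightarrow> 'a poly" where
  "tw_pow q f n = ((tw_mult q f) ^^ n) 1"

definition drinfeld_phi ::
  "('q::{finite,field}) alg_closure poly \<Rightarrow> 'q poly \<Rightarrow> 'q alg_closure poly" where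
  "drinfeld_phi phiT a =
     (\<Sum>k\<le>degree a. smult (to_ac (coeff a k)) (tw_pow CARD('q) phiT k))"

definition lin_eval :: "nat \<Rightarrow> 'a::comm_ring_1 poly \<Rightarrow> 'a \<Rightarrow> 'a" where
  "lin_eval q f x = (\<Sum>i\<le>degree f. coeff f i * x ^ (q ^ i))"

definition torsion ::
  "('q::{finite,field}) alg_closure poly \<Rightarrow> 'q poly \<Rightarrow> 'q alg_closure set" where
  "torsion phiT a = {\<beta>. lin_eval CARD('q) (drinfeld_phi phiT a) \<beta> = 0}"

definition fq_span :: "('q::{finite,field}) alg_closure set \<Rightarrow> 'q alg_closure set" where
  "fq_span B = {\<Sum>b\<in>B. to_ac (c b) * b | c :: 'q alg_closure \<Rightarrow> 'q. True}"

definition fq_indep :: "('q::{finite,field}) alg_closure set \<Rightarrow> bool" where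
  "fq_indep B \<longleftrightarrow> (\<forall>c :: 'q alg_closure \<Rightarrow> 'q.
      (\<Sum>b\<in>B. to_ac (c b) * b) = 0 \<longrightarrow> (\<forall>b\<in>B. c b = 0))"

definition fq_dim_eq :: "('q::{finite,field}) alg_closure set \<Rightarrow> nat \<Rightarrow> bool" where
  "fq_dim_eq V n \<longleftrightarrow>
     (\<exists>B. finite B \<and> card B = n \<and> fq_indep B \<and> fq_span B = V)"

end

theory Submission
  imports Defs "HOL-Library.FuncSet"
begin

definition spanS :: "'a::field set \<Rightarrow> 'a set \<Rightarrow> 'a set" where
  "spanS S B = {\<Sum>b\<in>B. c b * b | c. \<forall>b\<in>B. c b \<in> S}"

definition indepS :: "'a::field set \<Rightarrow> 'a set \<Rightarrow> bool" where
  "indepS S B \<longleftrightarrow> (\<forall>c. (\<forall>b\<in>B. c b \<in> S) \<longrightarrow> (\<Sum>b\<in>B. c b * b) = 0 \<longrightarrow> (\<forall>b\<in>B. c b = 0))"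

lemma spanS_I: "\<forall>b\<in>B. c b \<in> S \<Longrightarrow> (\<Sum>b\<in>B. c b * b) \<in> spanS S B"
  unfolding spanS_def by blast

lemma sum_in_V:
  fixes S V :: "'a::field set"
  assumes V0: "0 \<in> V" and Vadd: "\<forall>x\<in>V. \<forall>y\<in>V. x + y \<in> V"
    and Vsc: "\<forall>s\<in>S. \<forall>x\<in>V. s * x \<in> V"
    and "finite B" "B \<subseteq> V" "\<forall>b\<in>B. c b \<in> S"
  shows "(\<Sum>b\<in>B. c b * b) \<in> V"
  using assms(4-6)
proof (induction B rule: finite_induct)
  case empty then show ?case using V0 by simp
next
  case (insert x F)
  then show ?case using Vadd Vsc by simp
qed

lemma card_spanS:
  fixes S B :: "'a::field set"
  assumes "finite B" "finite S" "indepS S B" "\<forall>x\<in>S. \<forall>y\<in>S. x - y \<in> S"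
  shows "card (spanS S B) = card S ^ card B"
proof -
  let ?f = "\<lambda>c. \<Sum>b\<in>B. c b * b"
  have eq: "spanS S B = ?f ` (PiE B (\<lambda>_. S))"
  proof
    show "spanS S B \<subseteq> ?f ` (PiE B (\<lambda>_. S))"
    proof
      fix x assume "x \<in> spanS S B"
      then obtain c where c: "\<forall>b\<in>B. c b \<in> S" "x = ?f c" unfolding spanS_def by auto
      have r1: "restrict c B \<in> PiE B (\<lambda>_. S)" using c by auto
      have r2: "x = ?f (restrict c B)" using c by (auto intro: sum.cong)
      show "x \<in> ?f ` (PiE B (\<lambda>_. S))" by (rule image_eqI[where f="?f", OF r2 r1])
    qed
  next
    show "?f ` (PiE B (\<lambda>_. S)) \<subseteq> spanS S B"
      by (auto simp: PiE_iff intro!: spanS_I)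
  qed
  have inj: "inj_on ?f (PiE B (\<lambda>_. S))"
  proof
    fix c d assume c: "c \<in> PiE B (\<lambda>_. S)" and d: "d \<in> PiE B (\<lambda>_. S)" and e: "?f c = ?f d"
    have "(\<Sum>b\<in>B. (c b - d b) * b) = ?f c - ?f d"
      by (simp add: sum_subtractf algebra_simps)
    also have "\<dots> = 0" using e by simp
    finally have "(\<Sum>b\<in>B. (\<lambda>b. c b - d b) b * b) = 0" .
    moreover have "\<forall>b\<in>B. c b - d b \<in> S" using c d assms(4) by (auto simp: PiE_iff)
    ultimately have "\<forall>b\<in>B. c b - d b = 0"
      using assms(3)[unfolded indepS_def, rule_format, of "\<lambda>b. c b - d b"] by blast
    then show "c = d" using c d by (intro PiE_ext) auto
  qed
  have "card (spanS S B) = card (PiE B (\<lambda>_. S))" unfolding eq using inj by (rule card_image)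
  also have "\<dots> = card S ^ card B" using assms(1) by (simp add: card_PiE)
  finally show ?thesis .
qed

lemma basis_exists:
  fixes S V :: "'a::field set"
  assumes S0: "0 \<in> S" and S1: "1 \<in> S" and Sminus: "\<forall>x\<in>S. \<forall>y\<in>S. x - y \<in> S"
    and Smult: "\<forall>x\<in>S. \<forall>y\<in>S. x * y \<in> S" and Sinv: "\<forall>x\<in>S. inverse x \<in> S"
    and Sfin: "finite S"
    and Vfin: "finite V" and V0: "0 \<in> V" and Vadd: "\<forall>x\<in>V. \<forall>y\<in>V. x + y \<in> V"
    and Vsc: "\<forall>s\<in>S. \<forall>x\<in>V. s * x \<in> V"
  shows "\<exists>B. finite B \<and> B \<subseteq> V \<and> indepS S B \<and> spanS S B = V \<and> card V = card S ^ card B"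
proof -
  let ?A = "{B. B \<subseteq> V \<and> indepS S B}"
  have "?A \<subseteq> Pow V" by auto
  hence "finite ?A" using Vfin finite_subset by blast
  moreover have "{} \<in> ?A" by (simp add: indepS_def)
  ultimately obtain B where B: "B \<in> ?A" and max: "\<forall>C\<in>?A. B \<subseteq> C \<longrightarrow> B = C"
    using finite_has_maximal[of ?A] by blast
  have BV: "B \<subseteq> V" and ind: "indepS S B" using B by auto
  have Bfin: "finite B" using BV Vfin finite_subset by blast
  have sub: "spanS S B \<subseteq> V"
    unfolding spanS_def using sum_in_V[OF V0 Vadd Vsc Bfin BV] by auto
  have sup: "V \<subseteq> spanS S B"
  proof
    fix v assume vV: "v \<in> V"
    show "v \<in> spanS S B"
    proof (rule ccontr)
      assume nv: "v \<notin> spanS S B"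
      have vB: "v \<notin> B"
      proof
        assume "v \<in> B"
        hence "(\<Sum>b\<in>B. (if b = v then 1 else 0) * b) = v"
        proof -
          have "(\<Sum>b\<in>B. (if b = v then 1 else 0) * b) = (\<Sum>b\<in>B. if b = v then b else 0)"
            by (rule sum.cong) auto
          thus ?thesis using Bfin \<open>v \<in> B\<close> by (simp add: sum.delta)
        qed
        moreover have "\<forall>b\<in>B. (if b = v then 1 else 0) \<in> S" using S0 S1 by auto
        ultimately show False using nv spanS_I[of B "\<lambda>b. if b = v then 1 else 0" S] by simp
      qed
      have "indepS S (insert v B)"
        unfolding indepS_def
      proof (intro allI impI)
        fix c assume cS: "\<forall>b\<in>insert v B. c b \<in> S" and cz: "(\<Sum>b\<in>insert v B. c b * b) = 0"
        have cz': "c v * v + (\<Sum>b\<in>B. c b * b) = 0" using cz Bfin vB by simp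
        have cv: "c v = 0"
        proof (rule ccontr)
          assume cv: "c v \<noteq> 0"
          have se: "(\<Sum>b\<in>B. c b * b) = - (c v * v)" using cz' by (simp only: add_eq_0_iff)
          have "(\<Sum>b\<in>B. (- c b * inverse (c v)) * b) = - inverse (c v) * (\<Sum>b\<in>B. c b * b)"
            unfolding sum_distrib_left by (rule sum.cong) simp_all
          also have "\<dots> = v" unfolding se using cv by simp
          finally have vv: "v = (\<Sum>b\<in>B. (- c b * inverse (c v)) * b)" by simp
          have inS: "\<forall>b\<in>B. - c b * inverse (c v) \<in> S"
          proof
            fix b assume "b \<in> B"
            hence "c b \<in> S" using cS by simp
            hence "0 - c b \<in> S" using Sminus S0 by blast
            hence m: "- c b \<in> S" by simp
            have i: "inverse (c v) \<in> S" using Sinv cS by simp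
            show "- c b * inverse (c v) \<in> S" using Smult m i by blast
          qed
          have "v \<in> spanS S B" using spanS_I[OF inS] vv by simp
          thus False using nv by contradiction
        qed
        hence s0: "(\<Sum>b\<in>B. c b * b) = 0" using cz' by simp
        have cS': "\<forall>b\<in>B. c b \<in> S" using cS by simp
        have "\<forall>b\<in>B. c b = 0" using ind cS' s0 unfolding indepS_def by simp
        thus "\<forall>b\<in>insert v B. c b = 0" using cv by simp
      qed
      hence ins: "insert v B \<in> ?A" using vV BV by simp
      have "B = insert v B" using max ins by (meson subset_insertI)
      thus False using vB by blast
    qed
  qed
  have sp: "spanS S B = V" using sub sup by blast
  show ?thesis using Bfin BV ind sp card_spanS[OF Bfin Sfin ind Sminus] by auto
qed


section \<open>Finite fields\<close>

lemma ff_pow_card: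
  fixes x :: "'a::{finite,field}"
  shows "x ^ CARD('a) = x"
proof (cases "x = 0")
  case False
  have "x * (\<Prod>y\<in>UNIV-{0}. x * y) = x * x ^ (card (UNIV :: 'a set) - 1) * \<Prod>(UNIV-{0})"
    by (simp add: prod.distrib mult_ac)
  also have "x * x ^ (card (UNIV :: 'a set) - 1) = x ^ Suc (card (UNIV :: 'a set) - 1)"
    by (subst power_Suc) auto
  also have "Suc (card (UNIV :: 'a set) - 1) = card (UNIV :: 'a set)"
    using finite_UNIV_card_ge_0[where ?'a = 'a] by simp
  also have "(\<Prod>y\<in>UNIV-{0}. x * y) = (\<Prod>y\<in>UNIV-{0}. y)"
    by (rule prod.reindex_bij_witness[of _ "\<lambda>y. y / x" "\<lambda>y. x * y"]) (use False in auto)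
  finally show ?thesis
    by simp
qed (use finite_UNIV_card_ge_0[where ?'a = 'a] in auto)

lemma ff_pow_card_pow:
  fixes x :: "'a::{finite,field}"
  shows "x ^ (CARD('a) ^ n) = x"
  by (induction n) (simp_all add: ff_pow_card power_mult)

lemma ff_card_ge2: "CARD('a::{finite,field}) \<ge> 2"
proof -
  have "{0::'a, 1} \<subseteq> UNIV" by simp
  hence "card {0::'a, 1} \<le> CARD('a)" by (rule card_mono[OF finite[of UNIV]])
  thus ?thesis by simp
qed

lemma ff_char_prime: "prime CHAR('a::{finite,field})"
proof -
  have "CHAR('a) > 0" by (rule finite_imp_CHAR_pos) simp
  thus ?thesis by (rule prime_CHAR_semidom)
qed

lemma ff_card_char_pow: "\<exists>k. CARD('a::{finite,field}) = CHAR('a) ^ k"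
proof -
  define p where "p = CHAR('a)"
  have pp: "prime p" unfolding p_def by (rule ff_char_prime)
  hence p1: "p \<ge> 1" using prime_ge_1_nat by blast
  define S :: "'a set" where "S = range of_nat"
  have ofp: "of_nat (p * k) = (0::'a)" for k unfolding p_def by simp
  have modeq: "(of_nat n :: 'a) = of_nat (n mod p)" for n
  proof -
    have "n = n mod p + p * (n div p)" by simp
    hence "(of_nat n :: 'a) = of_nat (n mod p) + of_nat (p * (n div p))"
      by (metis of_nat_add)
    thus ?thesis using ofp by simp
  qed
  have Seq: "S = of_nat ` {..<p}"
  proof
    show "S \<subseteq> of_nat ` {..<p}"
    proof
      fix x assume "x \<in> S"
      then obtain n where "x = of_nat n" unfolding S_def by blast
      hence "x = of_nat (n mod p)" using modeq by simp
      moreover have "n mod p \<in> {..<p}" using p1 by simp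
      ultimately show "x \<in> of_nat ` {..<p}" by blast
    qed
  qed (auto simp: S_def)
  have inj: "inj_on (of_nat :: nat \<Rightarrow> 'a) {..<p}"
  proof (rule inj_onI)
    fix x y assume x: "x \<in> {..<p}" and y: "y \<in> {..<p}" and e: "(of_nat x :: 'a) = of_nat y"
    show "x = y"
    proof (rule ccontr)
      assume "x \<noteq> y"
      then consider "x < y" | "y < x" by linarith
      thus False
      proof cases
        case 1
        hence "p dvd (y - x)" using e of_nat_eq_iff_char_dvd[OF 1, where 'a='a] unfolding p_def by simp
        moreover have "0 < y - x" "y - x < p" using 1 y by auto
        ultimately show False using nat_dvd_not_less by blast
      next
        case 2
        hence "p dvd (x - y)" using e of_nat_eq_iff_char_dvd[OF 2, where 'a='a] unfolding p_def by simp
        moreover have "0 < x - y" "x - y < p" using 2 x by auto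
        ultimately show False using nat_dvd_not_less by blast
      qed
    qed
  qed
  have cardS: "card S = p" unfolding Seq using card_image[OF inj] by simp
  have S0: "0 \<in> S" unfolding S_def by (metis of_nat_0 rangeI)
  have S1: "1 \<in> S" unfolding S_def by (metis of_nat_1 rangeI)
  have Sminus: "\<forall>x\<in>S. \<forall>y\<in>S. x - y \<in> S"
  proof (intro ballI)
    fix x y assume "x \<in> S" "y \<in> S"
    then obtain a b where ab: "x = of_nat a" "y = of_nat b" unfolding S_def by blast
    have "(p - 1) * b + b = p * b" using p1 by (simp add: algebra_simps)
    hence "(of_nat ((p - 1) * b) :: 'a) + of_nat b = 0" using ofp by (metis of_nat_add)
    hence "(of_nat ((p - 1) * b) :: 'a) = - of_nat b" by (simp add: eq_neg_iff_add_eq_0)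
    hence "x - y = of_nat (a + (p - 1) * b)" using ab by simp
    thus "x - y \<in> S" unfolding S_def by (rule ssubst) (rule rangeI)
  qed
  have Smult: "\<forall>x\<in>S. \<forall>y\<in>S. x * y \<in> S"
    unfolding S_def by (auto simp flip: of_nat_mult)
  have Spow: "x ^ n \<in> S" if "x \<in> S" for x n
    using that unfolding S_def by (auto simp flip: of_nat_power)
  have Sinv: "\<forall>x\<in>S. inverse x \<in> S"
  proof
    fix x assume xS: "x \<in> S"
    show "inverse x \<in> S"
    proof (cases "x = 0")
      case True thus ?thesis using S0 by simp
    next
      case False
      have q2: "CARD('a) \<ge> 2" by (rule ff_card_ge2)
      have "x * x ^ (CARD('a) - 2) = x ^ (Suc (CARD('a) - 2))" by simp
      also have "Suc (CARD('a) - 2) = CARD('a) - 1" using q2 by simp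
      finally have e1: "x * x ^ (CARD('a) - 2) = x ^ (CARD('a) - 1)" .
      have "x * x ^ (CARD('a) - 1) = x ^ CARD('a)" using q2
        by (metis Suc_diff_1 less_le_trans pos2 power_Suc)
      hence "x * x ^ (CARD('a) - 1) = x * 1" using ff_pow_card[of x] by simp
      hence "x ^ (CARD('a) - 1) = 1" using False by simp
      hence "x * x ^ (CARD('a) - 2) = 1" using e1 by simp
      hence "inverse x = x ^ (CARD('a) - 2)" using False by (simp add: field_simps)
      thus ?thesis using Spow[OF xS] by simp
    qed
  qed
  have Sfin: "finite S" by simp
  obtain B :: "'a set" where B: "card (UNIV :: 'a set) = card S ^ card B"
    using basis_exists[OF S0 S1 Sminus Smult Sinv Sfin, of UNIV] by auto
  hence "CARD('a) = CHAR('a) ^ card B" using cardS unfolding p_def by simp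
  thus ?thesis by (rule exI)
qed

lemma ac_frob:
  fixes x y :: "'q::{finite,field} alg_closure"
  shows "(x + y) ^ (CARD('q) ^ i) = x ^ (CARD('q) ^ i) + y ^ (CARD('q) ^ i)"
proof -
  obtain k where k: "CARD('q) = CHAR('q) ^ k" using ff_card_char_pow by blast
  have pr: "prime CHAR('q alg_closure)" using ff_char_prime[where 'a='q] by simp
  have "CARD('q) ^ i = CHAR('q alg_closure) ^ (k * i)" using k by (simp add: power_mult)
  thus ?thesis using freshmans_dream'[OF pr] by blast
qed

lemma ac_char_dvd:
  assumes "i \<ge> 1"
  shows "(of_nat (CARD('q::{finite,field}) ^ i) :: 'q alg_closure) = 0"
proof -
  obtain k where k: "CARD('q) = CHAR('q) ^ k" using ff_card_char_pow by blast
  have "k \<ge> 1" using k ff_card_ge2[where 'a='q] by (cases k) auto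
  hence "CHAR('q) dvd CARD('q) ^ i" using k assms
    by (metis dvd_power dvd_trans not_one_le_zero order_less_le_trans zero_less_one)
  hence "CHAR('q alg_closure) dvd CARD('q) ^ i" by simp
  thus ?thesis using of_nat_eq_0_iff_char_dvd by blast
qed


section \<open>Twisted polynomial computations\<close>

lemma coeff_tw_mult_lin:
  fixes \<alpha> :: "'a::comm_ring_1"
  assumes q: "q > 0"
  shows "coeff (tw_mult q [:\<alpha>, 1:] g) n = \<alpha> * coeff g n + (if n = 0 then 0 else coeff g (n - 1) ^ q)"
proof -
  have d: "degree [:\<alpha>, 1:] = 1" by simp
  have c1[simp]: "coeff [:\<alpha>, 1:] (Suc 0) = 1" by simp
  have q1[simp]: "q ^ Suc 0 = q" by simp
  have "coeff (tw_mult q [:\<alpha>, 1:] g) n =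
        (\<Sum>i\<le>1. \<Sum>j\<le>degree g. if i + j = n then coeff [:\<alpha>, 1:] i * coeff g j ^ (q ^ i) else 0)"
    unfolding tw_mult_def d by (simp only: coeff_sum coeff_monom)
  also have "\<dots> = (\<Sum>j\<le>degree g. if j = n then \<alpha> * coeff g j else 0)
                 + (\<Sum>j\<le>degree g. if Suc j = n then coeff g j ^ q else 0)"
  proof -
    have s2: "(\<Sum>i\<le>(1::nat). G i) = G 0 + G 1" for G :: "nat \<Rightarrow> 'a"
      by (simp add: atMost_Suc)
    show ?thesis unfolding s2 by (intro arg_cong2[where f="(+)"] sum.cong) auto
  qed
  also have "(\<Sum>j\<le>degree g. if j = n then \<alpha> * coeff g j else 0) = \<alpha> * coeff g n"
  proof -
    have "(\<Sum>j\<le>degree g. if j = n then \<alpha> * coeff g j else 0) = (if n \<in> {..degree g} then \<alpha> * coeff g n else 0)"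
      by (rule sum.delta) simp
    also have "\<dots> = \<alpha> * coeff g n" by (simp add: coeff_eq_0)
    finally show ?thesis .
  qed
  also have "(\<Sum>j\<le>degree g. if Suc j = n then coeff g j ^ q else 0) = (if n = 0 then 0 else coeff g (n - 1) ^ q)"
  proof (cases n)
    case 0 thus ?thesis by simp
  next
    case (Suc m)
    have "(\<Sum>j\<le>degree g. if Suc j = n then coeff g j ^ q else 0) = (\<Sum>j\<le>degree g. if j = m then coeff g j ^ q else 0)"
      using Suc by (intro sum.cong) auto
    also have "\<dots> = (if m \<in> {..degree g} then coeff g m ^ q else 0)"
      by (rule sum.delta) simp
    also have "\<dots> = coeff g m ^ q" using q by (simp add: coeff_eq_0 power_0_left)
    finally show ?thesis using Suc by simp
  qed
  finally show ?thesis .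
qed

lemma tw_pow_Suc: "tw_pow q f (Suc k) = tw_mult q f (tw_pow q f k)"
  by (simp add: tw_pow_def)

lemma tw_pow_coeffs:
  fixes \<alpha> :: "'a::comm_ring_1"
  assumes q: "q > 0"
  shows "coeff (tw_pow q [:\<alpha>, 1:] k) 0 = \<alpha> ^ k \<and> coeff (tw_pow q [:\<alpha>, 1:] k) k = 1
         \<and> (\<forall>n>k. coeff (tw_pow q [:\<alpha>, 1:] k) n = 0)"
proof (induction k)
  case 0
  have "tw_pow q [:\<alpha>, 1:] 0 = 1" by (simp add: tw_pow_def)
  thus ?case by (simp add: coeff_1)
next
  case (Suc k)
  let ?T = "tw_pow q [:\<alpha>, 1:] k"
  have c: "coeff (tw_pow q [:\<alpha>, 1:] (Suc k)) n = \<alpha> * coeff ?T n + (if n = 0 then 0 else coeff ?T (n - 1) ^ q)" for n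
    unfolding tw_pow_Suc by (rule coeff_tw_mult_lin[OF q])
  have "coeff (tw_pow q [:\<alpha>, 1:] (Suc k)) 0 = \<alpha> ^ Suc k" using c[of 0] Suc by simp
  moreover have "coeff (tw_pow q [:\<alpha>, 1:] (Suc k)) (Suc k) = 1" using c[of "Suc k"] Suc by simp
  moreover have "\<forall>n>Suc k. coeff (tw_pow q [:\<alpha>, 1:] (Suc k)) n = 0"
  proof (intro allI impI)
    fix n assume n: "n > Suc k"
    hence "coeff ?T n = 0" "coeff ?T (n - 1) = 0" using Suc by auto
    thus "coeff (tw_pow q [:\<alpha>, 1:] (Suc k)) n = 0" using c[of n] q n by (simp add: power_0_left)
  qed
  ultimately show ?case by blast
qed

lemma phi_coeffs:
  fixes \<alpha> :: "'q::{finite,field} alg_closure" and c :: 'q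
  assumes R: "R > 0"
  defines "\<Phi> \<equiv> drinfeld_phi [:\<alpha>, 1:] (monom 1 R - [:c:])"
  shows "coeff \<Phi> 0 = \<alpha> ^ R - to_ac c" "coeff \<Phi> R = 1" "\<And>n. n > R \<Longrightarrow> coeff \<Phi> n = 0"
proof -
  let ?a = "monom 1 R - [:c:] :: 'q poly"
  let ?T = "tw_pow CARD('q) [:\<alpha>, 1:]"
  have q: "CARD('q) > 0" by simp
  have ca: "coeff ?a k = (if k = R then 1 else 0) - (if k = 0 then c else 0)" for k
    by (simp add: coeff_pCons')
  have "degree ?a = R"
  proof (rule antisym)
    show "degree ?a \<le> R" by (rule degree_le) (use R in \<open>auto simp: coeff_pCons'\<close>)
    show "R \<le> degree ?a" by (rule le_degree) (use R in \<open>simp add: coeff_pCons'\<close>)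
  qed
  hence cphi: "coeff \<Phi> n = (\<Sum>k\<le>R. to_ac (coeff ?a k) * coeff (?T k) n)" for n
    unfolding \<Phi>_def drinfeld_phi_def by (simp add: coeff_sum)
  have T0: "?T 0 = 1" by (simp add: tw_pow_def)
  have key: "coeff \<Phi> n = coeff (?T R) n - to_ac c * coeff 1 n" for n
  proof -
    have "coeff \<Phi> n = (\<Sum>k\<le>R. (if k = R then coeff (?T k) n else 0) - (if k = 0 then to_ac c * coeff (?T k) n else 0))"
      unfolding cphi using R by (intro sum.cong) (auto simp: coeff_pCons')
    also have "\<dots> = coeff (?T R) n - to_ac c * coeff (?T 0) n"
      by (simp add: sum_subtractf sum.delta')
    finally show ?thesis using T0 by simp
  qed
  have TR: "coeff (?T R) 0 = \<alpha> ^ R" "coeff (?T R) R = 1" "\<forall>n>R. coeff (?T R) n = 0"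
    using tw_pow_coeffs[OF q, of \<alpha> R] by auto
  show "coeff \<Phi> 0 = \<alpha> ^ R - to_ac c" using key[of 0] TR by simp
  show "coeff \<Phi> R = 1" using key[of R] TR R by (simp add: coeff_1)
  show "coeff \<Phi> n = 0" if "n > R" for n using key[of n] TR that by (simp add: coeff_1)
qed


section \<open>Counting roots\<close>

lemma card_roots_alg_closed:
  fixes p :: "'a::alg_closed_field poly"
  assumes "p \<noteq> 0" "\<forall>a. order a p \<le> 1"
  shows "card {x. poly p x = 0} = degree p"
  using assms
proof (induction "degree p" arbitrary: p rule: less_induct)
  case (less p)
  show ?case
  proof (cases "degree p = 0")
    case True
    then obtain c where pc: "p = [:c:]" by (elim degree_eq_zeroE)
    with less.prems have "c \<noteq> 0" by simp
    hence "{x. poly p x = 0} = {}" using pc by simp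
    thus ?thesis using True by simp
  next
    case False
    then obtain x where x: "poly p x = 0" using alg_closed_imp_poly_has_root by blast
    hence "[:-x, 1:] dvd p" using poly_eq_0_iff_dvd by blast
    then obtain g where pg: "p = [:-x, 1:] * g" by (elim dvdE)
    have g0: "g \<noteq> 0" using less.prems(1) pg by auto
    have deg: "degree p = Suc (degree g)" unfolding pg using g0 by (subst degree_mult_eq) auto
    have ord: "order a p = order a [:-x, 1:] + order a g" for a
      using order_mult[of "[:-x, 1:]" g a] less.prems(1) pg by simp
    have ox: "order x [:-x, 1:] = 1" using order_power_n_n[of x 1] by simp
    have "order x g = 0" using ord[of x] ox less.prems(2) by (metis add_le_same_cancel1 le_zero_eq)
    hence gx: "poly g x \<noteq> 0" using g0 order_root by blast
    have og: "\<forall>a. order a g \<le> 1" using ord less.prems(2) by (metis add_leD2)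
    have IH: "card {x. poly g x = 0} = degree g"
      using less.hyps[of g] deg g0 og by simp
    have "{y. poly p y = 0} = insert x {y. poly g y = 0}" unfolding pg by auto
    hence "card {y. poly p y = 0} = Suc (card {y. poly g y = 0})"
      using gx poly_roots_finite[OF g0] by simp
    thus ?thesis using IH deg by simp
  qed
qed

lemma pderiv_sum': "pderiv (\<Sum>i\<in>A. f i) = (\<Sum>i\<in>A. pderiv (f i))"
  by (induction A rule: infinite_finite_induct) (simp_all add: pderiv_add)

lemma order_le1_pderiv:
  fixes p :: "'a::field poly"
  assumes "poly (pderiv p) a \<noteq> 0"
  shows "order a p \<le> 1"
proof (rule ccontr)
  assume "\<not> order a p \<le> 1"
  hence "2 \<le> order a p" by simp
  hence "[:-a, 1:] ^ 2 dvd [:-a, 1:] ^ order a p" by (rule le_imp_power_dvd)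
  hence "[:-a, 1:] ^ 2 dvd p" using order_1[of a p] by (rule dvd_trans)
  then obtain h where h: "p = [:-a, 1:] ^ 2 * h" by (elim dvdE)
  have z: "poly [:-a, 1:] a = 0" by simp
  have "poly (pderiv p) a = 0" unfolding h power2_eq_square pderiv_mult poly_add poly_mult z by simp
  thus False using assms by simp
qed

section \<open>Linearized polynomials\<close>

lemma lin_eval_add:
  fixes f :: "'q::{finite,field} alg_closure poly"
  shows "lin_eval CARD('q) f (x + y) = lin_eval CARD('q) f x + lin_eval CARD('q) f y"
  unfolding lin_eval_def ac_frob by (simp add: distrib_left sum.distrib)

lemma lin_eval_smul:
  fixes f :: "'q::{finite,field} alg_closure poly"
  shows "lin_eval CARD('q) f (to_ac s * x) = to_ac s * lin_eval CARD('q) f x"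
proof -
  have "to_ac s ^ (CARD('q) ^ i) = to_ac s" for i
    by (metis to_ac_power ff_pow_card_pow)
  thus ?thesis unfolding lin_eval_def by (simp add: power_mult_distrib sum_distrib_left mult.left_commute)
qed

lemma lin_eval_0:
  "q > 0 \<Longrightarrow> lin_eval q f 0 = 0"
  unfolding lin_eval_def by (simp add: power_0_left)

lemma main_dim:
  fixes \<Phi> :: "'q::{finite,field} alg_closure poly"
  assumes c0: "coeff \<Phi> 0 \<noteq> 0" and dR: "degree \<Phi> = R"
  shows "fq_dim_eq {\<beta>. lin_eval CARD('q) \<Phi> \<beta> = 0} R"
proof -
  define q where "q = CARD('q)"
  have q1: "q > 1" using ff_card_ge2[where 'a='q] unfolding q_def by simp
  define V where "V = {\<beta>. lin_eval CARD('q) \<Phi> \<beta> = 0}"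
  define Lp where "Lp = (\<Sum>i\<le>R. monom (coeff \<Phi> i) (q ^ i))"
  have "\<Phi> \<noteq> 0" using c0 by auto
  hence lc: "coeff \<Phi> R \<noteq> 0" using dR leading_coeff_0_iff by blast
  have polyLp: "poly Lp x = lin_eval CARD('q) \<Phi> x" for x
    unfolding Lp_def lin_eval_def q_def dR by (simp add: poly_sum poly_monom)
  have cLp: "coeff Lp n = (\<Sum>i\<le>R. if q ^ i = n then coeff \<Phi> i else 0)" for n
    unfolding Lp_def by (simp add: coeff_sum)
  have cLpR: "coeff Lp (q ^ R) = coeff \<Phi> R"
  proof -
    have "coeff Lp (q ^ R) = (\<Sum>i\<le>R. if i = R then coeff \<Phi> i else 0)"
      unfolding cLp using power_inject_exp[OF q1] by (intro sum.cong) auto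
    also have "\<dots> = coeff \<Phi> R" by (subst sum.delta) simp_all
    finally show ?thesis .
  qed
  have cLpbig: "coeff Lp n = 0" if "n > q ^ R" for n
  proof -
    have "q ^ i \<noteq> n" if "i \<le> R" for i
    proof -
      have "q ^ i \<le> q ^ R" using that q1 by (intro power_increasing) auto
      thus ?thesis using \<open>n > q ^ R\<close> by simp
    qed
    thus ?thesis unfolding cLp by (intro sum.neutral) auto
  qed
  have degLp: "degree Lp = q ^ R"
  proof (rule antisym)
    show "degree Lp \<le> q ^ R" by (rule degree_le) (use cLpbig in auto)
    show "q ^ R \<le> degree Lp" by (rule le_degree) (simp add: cLpR lc)
  qed
  have Lp0: "Lp \<noteq> 0" using cLpR lc by auto
  have pd: "poly (pderiv Lp) x = coeff \<Phi> 0" for x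
  proof -
    have "poly (pderiv Lp) x = (\<Sum>i\<le>R. of_nat (q ^ i) * coeff \<Phi> i * x ^ (q ^ i - 1))"
      unfolding Lp_def pderiv_sum' by (simp add: poly_sum pderiv_monom poly_monom)
    also have "\<dots> = (\<Sum>i\<le>R. if i = 0 then coeff \<Phi> 0 else 0)"
    proof (intro sum.cong refl)
      fix i assume "i \<in> {..R}"
      show "of_nat (q ^ i) * coeff \<Phi> i * x ^ (q ^ i - 1) = (if i = 0 then coeff \<Phi> 0 else 0)"
      proof (cases "i = 0")
        case True thus ?thesis by simp
      next
        case False
        hence "(of_nat (q ^ i) :: 'q alg_closure) = 0" unfolding q_def by (intro ac_char_dvd) simp
        thus ?thesis using False by simp
      qed
    qed
    also have "\<dots> = coeff \<Phi> 0" by (subst sum.delta) simp_all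
    finally show ?thesis .
  qed
  have ordLp: "\<forall>a. order a Lp \<le> 1" using order_le1_pderiv pd c0 by metis
  have VLp: "V = {x. poly Lp x = 0}" unfolding V_def polyLp by simp
  have cardV: "card V = q ^ R" unfolding VLp using card_roots_alg_closed[OF Lp0 ordLp] degLp by simp
  have Vfin: "finite V" unfolding VLp using poly_roots_finite[OF Lp0] .
  have V0: "0 \<in> V" unfolding V_def by (simp add: lin_eval_0[of "CARD('q)"])
  have Vadd: "\<forall>x\<in>V. \<forall>y\<in>V. x + y \<in> V" unfolding V_def by (simp add: lin_eval_add)
  define S :: "'q alg_closure set" where "S = range to_ac"
  have Vsc: "\<forall>s\<in>S. \<forall>x\<in>V. s * x \<in> V" unfolding V_def S_def by (auto simp: lin_eval_smul)
  have S0: "0 \<in> S" unfolding S_def using rangeI[of to_ac 0] by simp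
  have S1: "1 \<in> S" unfolding S_def using rangeI[of to_ac 1] by simp
  have Sminus: "\<forall>x\<in>S. \<forall>y\<in>S. x - y \<in> S" unfolding S_def by (auto simp flip: to_ac_diff)
  have Smult: "\<forall>x\<in>S. \<forall>y\<in>S. x * y \<in> S" unfolding S_def by (auto simp flip: to_ac_mult)
  have Sinv: "\<forall>x\<in>S. inverse x \<in> S" unfolding S_def by (auto simp flip: to_ac_inverse)
  have Sfin: "finite S" unfolding S_def by simp
  have cardS: "card S = q" unfolding S_def q_def using card_image[OF inj_to_ac[where 'a='q]] by simp
  obtain B where B: "finite B" "B \<subseteq> V" "indepS S B" "spanS S B = V" "card V = card S ^ card B"
    using basis_exists[OF S0 S1 Sminus Smult Sinv Sfin Vfin V0 Vadd Vsc] by blast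
  have "q ^ card B = q ^ R" using B(5) cardV cardS by simp
  hence cB: "card B = R" using power_inject_exp[OF q1] by simp
  have ind: "fq_indep B"
    unfolding fq_indep_def
  proof (intro allI impI)
    fix c :: "'q alg_closure \<Rightarrow> 'q"
    assume z: "(\<Sum>b\<in>B. to_ac (c b) * b) = 0"
    have inS: "\<forall>b\<in>B. to_ac (c b) \<in> S" unfolding S_def by simp
    have "\<forall>b\<in>B. to_ac (c b) = 0"
      using B(3)[unfolded indepS_def, rule_format, of "\<lambda>b. to_ac (c b)"] inS z by simp
    thus "\<forall>b\<in>B. c b = 0" by simp
  qed
  have sp: "fq_span B = V"
  proof
    show "fq_span B \<subseteq> V"
    proof
      fix x assume "x \<in> fq_span B"
      then obtain c :: "'q alg_closure \<Rightarrow> 'q" where x: "x = (\<Sum>b\<in>B. to_ac (c b) * b)"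
        unfolding fq_span_def by blast
      have "\<forall>b\<in>B. to_ac (c b) \<in> S" unfolding S_def by simp
      hence "x \<in> spanS S B" unfolding x by (rule spanS_I)
      thus "x \<in> V" using B(4) by simp
    qed
    show "V \<subseteq> fq_span B"
    proof
      fix x assume "x \<in> V"
      hence "x \<in> spanS S B" using B(4) by simp
      then obtain c where c: "\<forall>b\<in>B. c b \<in> S" and x: "x = (\<Sum>b\<in>B. c b * b)"
        unfolding spanS_def by blast
      have "x = (\<Sum>b\<in>B. to_ac (of_ac (c b) :: 'q) * b)"
        unfolding x using c unfolding S_def by (intro sum.cong refl) (simp add: to_ac_of_ac)
      thus "x \<in> fq_span B" unfolding fq_span_def by (intro CollectI exI[of _ "\<lambda>b. of_ac (c b)"]) simp
    qed
  qed
  show ?thesis unfolding fq_dim_eq_def V_def[symmetric]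
    using B(1) cB ind sp by blast
qed


section \<open>Non-vanishing of the constant term\<close>

lemma map_to_ac_add: "map_poly to_ac (p + q) = map_poly to_ac p + map_poly to_ac q"
  by (rule poly_eqI) (simp add: coeff_map_poly)

lemma map_to_ac_smult: "map_poly to_ac (smult c p) = smult (to_ac c) (map_poly to_ac p)"
  by (rule map_poly_smult) simp_all

lemma map_to_ac_mult: "map_poly to_ac (p * q) = map_poly to_ac p * map_poly to_ac q"
proof (induction p)
  case 0 thus ?case by simp
next
  case (pCons a p)
  have "map_poly to_ac (pCons a p * q) = smult (to_ac a) (map_poly to_ac q) + pCons 0 (map_poly to_ac (p * q))"
    by (simp add: map_to_ac_add map_to_ac_smult map_poly_pCons)
  also have "\<dots> = pCons (to_ac a) (map_poly to_ac p) * map_poly to_ac q"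
    using pCons.IH by simp
  also have "pCons (to_ac a) (map_poly to_ac p) = map_poly to_ac (pCons a p)"
    by (simp add: map_poly_pCons)
  finally show ?case .
qed

lemma min_poly_dvd:
  fixes P g :: "'q::{finite,field} poly"
  assumes irr: "irreducible P"
    and rP: "poly (map_poly to_ac P) \<alpha> = 0" and rg: "poly (map_poly to_ac g) \<alpha> = 0"
  shows "P dvd g"
proof -
  define ev where "ev p = poly (map_poly to_ac p) \<alpha>" for p :: "'q poly"
  have ev_add: "ev (p + q) = ev p + ev q" for p q unfolding ev_def map_to_ac_add by simp
  have ev_mult: "ev (p * q) = ev p * ev q" for p q unfolding ev_def map_to_ac_mult by simp
  define Q where "Q n \<longleftrightarrow> (\<exists>d. d \<noteq> 0 \<and> degree d = n \<and> ev d = 0)" for n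
  have P0: "P \<noteq> 0" using irr by auto
  have evP: "ev P = 0" unfolding ev_def by (rule rP)
  have evg: "ev g = 0" unfolding ev_def by (rule rg)
  have "Q (degree P)" unfolding Q_def using P0 evP by blast
  define n where "n = (LEAST n. Q n)"
  have "Q n" unfolding n_def by (rule LeastI) fact
  then obtain d where d: "d \<noteq> 0" "degree d = n" "ev d = 0" unfolding Q_def by blast
  have mindeg: "degree d \<le> degree e" if "e \<noteq> 0" "ev e = 0" for e
  proof -
    have "Q (degree e)" unfolding Q_def using that by blast
    hence "n \<le> degree e" unfolding n_def by (rule Least_le)
    thus ?thesis using d by simp
  qed
  have dvd_all: "d dvd p" if "ev p = 0" for p
  proof -
    have "ev p = ev (d * (p div d) + p mod d)" by simp
    also have "\<dots> = ev d * ev (p div d) + ev (p mod d)" by (simp only: ev_add ev_mult)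
    finally have "ev p = ev d * ev (p div d) + ev (p mod d)" .
    hence et: "ev (p mod d) = 0" using that d(3) by simp
    have "p mod d = 0"
    proof (rule ccontr)
      assume "p mod d \<noteq> 0"
      hence "degree (p mod d) < degree d" using degree_mod_less' d(1) by blast
      moreover have "degree d \<le> degree (p mod d)" by (rule mindeg[OF \<open>p mod d \<noteq> 0\<close> et])
      ultimately show False by simp
    qed
    thus ?thesis by (simp add: dvd_eq_mod_eq_0)
  qed
  have "d dvd P" by (rule dvd_all[OF evP])
  then obtain e where e: "P = d * e" by (elim dvdE)
  have "\<not> is_unit d"
  proof
    assume "is_unit d"
    hence "degree d = 0" using is_unit_iff_degree d(1) by blast
    then obtain c where dc: "d = [:c:]" by (elim degree_eq_zeroE)
    have "ev d = to_ac c" unfolding ev_def dc by (simp add: map_poly_pCons)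
    hence "c = 0" using d(3) by simp
    thus False using d(1) dc by simp
  qed
  hence "is_unit e" using Factorial_Ring.irreducibleD[OF irr e] by blast
  hence "P dvd d" unfolding e using mult_unit_dvd_iff[OF \<open>is_unit e\<close>, of d d] by simp
  moreover have "d dvd g" by (rule dvd_all[OF evg])
  ultimately show ?thesis by (rule dvd_trans)
qed

lemma root_not:
  fixes P g :: "'q::{finite,field} poly"
  assumes irr: "irreducible P" and gd: "g dvd P - 1"
    and rP: "poly (map_poly to_ac P) \<alpha> = 0" and rg: "poly (map_poly to_ac g) \<alpha> = 0"
  shows False
proof -
  have "P dvd g" by (rule min_poly_dvd[OF irr rP rg])
  hence "P dvd P - 1" using gd by (rule dvd_trans)
  hence "P dvd P - (P - 1)" by (rule dvd_diff[OF dvd_refl])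
  hence "P dvd 1" by simp
  thus False using irr irreducible_not_unit by blast
qed

theorem lemma3p2:
  fixes r \<delta> R l m :: nat
    and a :: "nat \<Rightarrow> 'q::{finite,field}"
    and P h :: "'q poly"
    and \<alpha> :: "'q alg_closure"
  assumes "r \<ge> 1" and "\<delta> \<ge> 2" and "R = r + \<delta> - 1"
    and "\<forall>i<l. a i \<noteq> 0"
    and "h = (\<Prod>i<l. monom 1 R - [:a i:])"
    and "lead_coeff P = 1" and "irreducible P" and "degree P = m"
    and "h dvd P - 1"
    and "poly (map_poly to_ac P) \<alpha> = 0"
  shows "\<forall>i<l. fq_dim_eq (torsion [:\<alpha>, 1:] (monom 1 R - [:a i:])) R"
proof (intro allI impI)
  fix i assume i: "i < l"
  define g where "g = monom 1 R - [:a i:]"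
  have R0: "R > 0" using assms(1-3) by simp
  have ne: "\<alpha> ^ R - to_ac (a i) \<noteq> 0"
  proof
    assume z: "\<alpha> ^ R - to_ac (a i) = 0"
    have "g dvd h" unfolding assms(5) g_def by (rule dvd_prodI) (use i in auto)
    hence gd: "g dvd P - 1" using assms(9) by (rule dvd_trans)
    have mg: "map_poly to_ac g = monom 1 R - [:to_ac (a i):]"
      unfolding g_def by (rule poly_eqI) (simp add: coeff_map_poly coeff_pCons')
    have "poly (map_poly to_ac g) \<alpha> = 0" unfolding mg using z by (simp add: poly_monom)
    thus False using root_not[OF assms(7) gd assms(10)] by blast
  qed
  define \<Phi> where "\<Phi> = drinfeld_phi [:\<alpha>, 1:] g"
  have c0: "coeff \<Phi> 0 \<noteq> 0" using phi_coeffs(1)[OF R0, of \<alpha> "a i"] ne unfolding \<Phi>_def g_def by simp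
  have cR: "coeff \<Phi> R = 1" using phi_coeffs(2)[OF R0, of \<alpha> "a i"] unfolding \<Phi>_def g_def by simp
  have cbig: "coeff \<Phi> n = 0" if "n > R" for n
    using phi_coeffs(3)[OF R0 that, of \<alpha> "a i"] unfolding \<Phi>_def g_def by simp
  have dR: "degree \<Phi> = R"
  proof (rule antisym)
    show "degree \<Phi> \<le> R" by (rule degree_le) (use cbig in auto)
    show "R \<le> degree \<Phi>" by (rule le_degree) (simp add: cR)
  qed
  have "fq_dim_eq {\<beta>. lin_eval CARD('q) \<Phi> \<beta> = 0} R" by (rule main_dim[OF c0 dR])
  thus "fq_dim_eq (torsion [:\<alpha>, 1:] (monom 1 R - [:a i:])) R"
    unfolding torsion_def \<Phi>_def g_def .
qed

end
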